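(* Let $\nu$ be a non-degenerate probability measure on $\mathbb{R}$ with support bounded from above, with one-sided domain of means $(m_0,m_+)$ and pseudo-variance function $\mathbb{V}$ (as defined in the context), and let $B=B(\nu)=\max\{0,\sup\operatorname{supp}(\nu)\}$. Fix $m_1\in(m_0,m_+)$ and consider the Cauchy–Stieltjes kernel family generated by $Q_{m_1}$, with mean function $k_1$, domain of means $(\overline m_0,\overline m_+)=k_1((0,\theta_+))$ and pseudo-variance function $\mathbb{V}_1$. For $m\in(m_0,m_+)$ set $\overline m=k_1(\psi(m))$. Then: (i) $$\overline m=\begin{cases}\dfrac{m^2\mathbb{V}(m_1)-m_1^2\mathbb{V}(m)}{m\mathbb{V}(m_1)-m_1\mathbb{V}(m)}&\text{if }m\neq m_1,\\[2mm]\dfrac{2m_1\mathbb{V}(m_1)-m_1^2\mathbb{V}'(m_1)}{\mathbb{V}(m_1)-m_1\mathbb{V}'(m_1)}&\text{if }m=m_1;\end{cases}$$ (ii) the one-sided domain of means of the family generated by $Q_{m_1}$ is $$(\overline m_0,\overline m_+)=\left(m_1,\ \frac{m_+G_\nu(B)-m_1^2/\mathbb{V}(m_1)}{G_\nu(B)-m_1/\mathbb{V}(m_1)}\right),$$ where $G_\nu(B)$ is interpreted as the limit $\lim_{b\to B^+}G_\nu(b)$ (the right endpoint being understood as the corresponding limit as $b\to B^+$); (iii) $$\frac{\mathbb{V}_1(\overline m)}{\overline m}+\overline m=\frac{\mathbb{V}(m)}{m}+m.$$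
   Context: Let $A(\nu)=\sup\operatorname{supp}(\nu)$, $B=\max\{0,A(\nu)\}$, $\theta_+=1/B\in(0,\infty]$. For $\theta\in[0,\theta_+)$: $M(\theta)=\int\frac{\nu(dx)}{1-\theta x}$, $P_\theta(dx)=\frac{\nu(dx)}{M(\theta)(1-\theta x)}$, $k(\theta)=\int xP_\theta(dx)=\frac{M(\theta)-1}{\theta M(\theta)}$. The function $k$ is strictly increasing on $(0,\theta_+)$ and maps it onto $(m_0,m_+)$, where $m_0=\lim_{\theta\to0^+}k(\theta)$, $m_+=\lim_{\theta\to\theta_+}k(\theta)$; $\psi:(m_0,m_+)\to(0,\theta_+)$ is its inverse. The pseudo-variance function is $\mathbb{V}(m)=m\big(\frac{1}{\psi(m)}-m\big)$, i.e. $\frac{\mathbb{V}(m)}{m}=\frac1{\psi(m)}-m$ (at $m=0$, $\mathbb{V}(m)/m$ means $1/\psi(0)$). $Q_m=P_{\psi(m)}$ is the member with mean $m$; for $m\ne0$, $Q_m(dx)=\frac{\mathbb{V}(m)}{\mathbb{V}(m)+m(m-x)}\nu(dx)$. $G_\nu(z)=\int\frac{\nu(dx)}{z-x}$ is the Cauchy transform. For the family generated by $Q_{m_1}$: $M_1(\theta)=\int\frac{Q_{m_1}(dx)}{1-\theta x}$, $\overline P_\theta(dx)=\frac{Q_{m_1}(dx)}{M_1(\theta)(1-\theta x)}$, $k_1(\theta)=\int x\overline P_\theta(dx)$ for $\theta\in(0,\theta_+)$, $k_1$ is strictly increasing with image $(\overline m_0,\overline m_+)$ and inverse $\psi_1$,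 and $\mathbb{V}_1(\overline m)=\overline m\big(\frac1{\psi_1(\overline m)}-\overline m\big)$. *)

theory Defs
  imports "HOL-Probability.Probability"
begin

definition supp :: "real measure \<Rightarrow> real set" where
  "supp \<mu> = {x. \<forall>e>0. measure \<mu> {x - e<..<x + e} > 0}"

definition Bnd :: "real measure \<Rightarrow> real" where
  "Bnd \<mu> = max 0 (Sup (supp \<mu>))"

text \<open>The parameter interval (0, theta_+) with theta_+ = 1/B (= infinity if B = 0).\<close>
definition Theta :: "real measure \<Rightarrow> real set" where
  "Theta \<mu> = {\<theta>. 0 < \<theta> \<and> \<theta> * Bnd \<mu> < 1}"

definition theta_plus_filter :: "real measure \<Rightarrow> real filter" where
  "theta_plus_filter \<mu> = (if Bnd \<mu> = 0 then at_top else at_left (1 / Bnd \<mu>))"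

definition Mf :: "real measure \<Rightarrow> real \<Rightarrow> real" where
  "Mf \<mu> \<theta> = (\<integral>x. 1 / (1 - \<theta> * x) \<partial>\<mu>)"

definition kf :: "real measure \<Rightarrow> real \<Rightarrow> real" where
  "kf \<mu> \<theta> = (Mf \<mu> \<theta> - 1) / (\<theta> * Mf \<mu> \<theta>)"

definition psif :: "real measure \<Rightarrow> real \<Rightarrow> real" where
  "psif \<mu> m = the_inv_into (Theta \<mu>) (kf \<mu>) m"

definition Vf :: "real measure \<Rightarrow> real \<Rightarrow> real" where
  "Vf \<mu> m = m * (1 / psif \<mu> m - m)"

text \<open>The quantity V(m)/m, with the convention V(0)/0 = 1/psi(0).\<close>
definition Vratio :: "real measure \<Rightarrow> real \<Rightarrow> real" where
  "Vratio \<mu> m = 1 / psif \<mu> m - m"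

definition mplus :: "real measure \<Rightarrow> real" where
  "mplus \<mu> = Lim (theta_plus_filter \<mu>) (kf \<mu>)"

definition Pf :: "real measure \<Rightarrow> real \<Rightarrow> real measure" where
  "Pf \<mu> \<theta> = density \<mu> (\<lambda>x. ennreal (1 / (Mf \<mu> \<theta> * (1 - \<theta> * x))))"

definition Qf :: "real measure \<Rightarrow> real \<Rightarrow> real measure" where
  "Qf \<mu> m = Pf \<mu> (psif \<mu> m)"

definition Gf :: "real measure \<Rightarrow> real \<Rightarrow> real" where
  "Gf \<mu> z = (\<integral>x. 1 / (z - x) \<partial>\<mu>)"

end

theory Submission
  imports Defs
begin


lemma dct_within:
  fixes s :: "real \<Rightarrow> 'a \<Rightarrow> real" and f :: "'a \<Rightarrow> real"
  assumes fm: "finite_measure M"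
   and meas: "\<And>t. t \<in> S \<Longrightarrow> s t \<in> borel_measurable M"
   and fmeas: "f \<in> borel_measurable M"
   and lim: "AE x in M. ((\<lambda>t. s t x) \<longlongrightarrow> f x) (at t0 within S)"
   and bnd: "\<And>t. t \<in> S \<Longrightarrow> AE x in M. norm (s t x) \<le> C"
  shows "((\<lambda>t. integral\<^sup>L M (s t)) \<longlongrightarrow> integral\<^sup>L M f) (at t0 within S)"
proof -
  interpret finite_measure M by fact
  show ?thesis unfolding tendsto_at_iff_sequentially comp_def
  proof (intro allI impI)
    fix X :: "nat \<Rightarrow> real" assume X: "\<forall>i. X i \<in> S - {t0}" "X \<longlonglongrightarrow> t0"
    then have fl: "filterlim X (at t0 within S) sequentially"
      by (auto simp: filterlim_at intro!: always_eventually)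
    show "(\<lambda>i. integral\<^sup>L M (s (X i))) \<longlonglongrightarrow> integral\<^sup>L M f"
    proof (rule integral_dominated_convergence[where w="\<lambda>_. C"])
      show "f \<in> borel_measurable M" by fact
      show "\<And>i. s (X i) \<in> borel_measurable M" using X meas by auto
      show "integrable M (\<lambda>_. C)" by simp
      show "AE x in M. (\<lambda>i. s (X i) x) \<longlonglongrightarrow> f x" using lim
        by eventually_elim (rule filterlim_compose[OF _ fl])
      show "\<And>i. AE x in M. norm (s (X i) x) \<le> C" using X bnd by auto
    qed
  qed
qed

locale csk =
  fixes \<mu> :: "real measure" and B :: real
  assumes csk_prob: "prob_space \<mu>" and sets_eq: "sets \<mu> = sets borel" and B0: "0 \<le> B"
    and AE_le: "AE x in \<mu>. x \<le> B" and nondeg: "\<And>c. \<not> (AE x in \<mu>. x = c)"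

sublocale csk \<subseteq> P: prob_space \<mu> by (rule csk_prob)

context csk begin

lemma meas: "f \<in> borel_measurable borel \<Longrightarrow> f \<in> borel_measurable \<mu>"
  by (metis measurable_cong_sets sets_eq)

lemma space_eq: "space \<mu> = UNIV"
  using sets_eq_imp_space_eq[OF sets_eq] by simp

lemma mg: "(\<lambda>x. 1 / (1 - t * x)) \<in> borel_measurable \<mu>"
  by (rule meas) measurable

lemma AEg: "0 \<le> t \<Longrightarrow> t * B < 1 \<Longrightarrow>
   AE x in \<mu>. 1 - t * B \<le> 1 - t * x \<and> 0 < 1 - t * x \<and> 0 < 1 / (1 - t * x) \<and> 1 / (1 - t * x) \<le> 1 / (1 - t * B)"
  using AE_le
proof eventually_elim
  case (elim x)
  assume t: "0 \<le> t" "t * B < 1"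
  have "t * x \<le> t * B" using elim t by (simp add: mult_left_mono)
  then show ?case using t by (auto simp: field_simps)
qed

lemma int_bdd: "AE x in \<mu>. \<bar>f x\<bar> \<le> (C::real) \<Longrightarrow> f \<in> borel_measurable \<mu> \<Longrightarrow> integrable \<mu> f"
  by (rule P.integrable_const_bound[where B=C]) auto

lemma int_g: "0 \<le> t \<Longrightarrow> t * B < 1 \<Longrightarrow> integrable \<mu> (\<lambda>x. 1 / (1 - t * x))"
proof -
  assume t: "0 \<le> t" "t * B < 1"
  show ?thesis
  apply (rule int_bdd[where C="1 / (1 - t * B)"])
  using AEg[OF t] apply eventually_elim apply auto[1]
  by (rule mg)
qed

lemma int_gc: "0 \<le> t \<Longrightarrow> t * B < 1 \<Longrightarrow> integrable \<mu> (\<lambda>x. c * (1 / (1 - t * x)))"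
  by (rule integrable_mult_right) (rule int_g)

lemma M_pos: "0 \<le> t \<Longrightarrow> t * B < 1 \<Longrightarrow> 0 < Mf \<mu> t \<and> Mf \<mu> t \<le> 1 / (1 - t * B)"
proof -
  assume t: "0 \<le> t" "t * B < 1"
  have ae: "AE x in \<mu>. 0 < 1 / (1 - t * x) \<and> 1 / (1 - t * x) \<le> 1 / (1 - t * B)"
    using AEg[OF t] by eventually_elim auto
  have nn: "0 \<le> Mf \<mu> t" unfolding Mf_def
    by (rule integral_nonneg_AE) (use ae in \<open>eventually_elim, auto\<close>)
  have "Mf \<mu> t \<noteq> 0"
  proof
    assume "Mf \<mu> t = 0"
    then have "AE x in \<mu>. 1 / (1 - t * x) = 0" unfolding Mf_def
      using integral_nonneg_eq_0_iff_AE[OF int_g[OF t]] ae by (smt (verit, del_insts) AE_mp AE_I2)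
    with ae have "AE x in \<mu>. False" by eventually_elim auto
    then show False by (simp add: P.AE_False)
  qed
  moreover have "Mf \<mu> t \<le> 1 / (1 - t * B)"
  proof -
    have "Mf \<mu> t \<le> (\<integral>x. 1 / (1 - t * B) \<partial>\<mu>)" unfolding Mf_def
      by (rule integral_mono_AE[OF int_g[OF t]]) (auto intro: AE_mp[OF ae])
    then show ?thesis by (simp add: P.prob_space)
  qed
  ultimately show ?thesis using nn by auto
qed

lemma M0: "Mf \<mu> 0 = 1"
  unfolding Mf_def by (simp add: P.prob_space)

definition "Th = {t. 0 < t \<and> t * B < 1}"

lemma k_le: "t \<in> Th \<Longrightarrow> kf \<mu> t \<le> B"
proof -
  assume "t \<in> Th"
  then have t: "0 < t" "t * B < 1" by (auto simp: Th_def)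
  then have M: "0 < Mf \<mu> t" "Mf \<mu> t \<le> 1 / (1 - t * B)" using M_pos by auto
  then have "Mf \<mu> t * (1 - t * B) \<le> 1" using t by (simp add: field_simps)
  then show ?thesis using t M unfolding kf_def by (simp add: field_simps)
qed

lemma pf:
  assumes s: "0 \<le> s" "s * B < 1" and t: "0 \<le> t" "t * B < 1" and st: "s \<noteq> t"
  shows "(\<integral>x. 1 / (1 - s * x) * (1 / (1 - t * x)) \<partial>\<mu>) = (s * Mf \<mu> s - t * Mf \<mu> t) / (s - t)"
proof -
  have "(\<integral>x. 1 / (1 - s * x) * (1 / (1 - t * x)) \<partial>\<mu>)
      = (\<integral>x. (s * (1 / (1 - s * x)) - t * (1 / (1 - t * x))) / (s - t) \<partial>\<mu>)"
  proof (rule integral_cong_AE)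
    show "(\<lambda>x. 1 / (1 - s * x) * (1 / (1 - t * x))) \<in> borel_measurable \<mu>" by (rule meas) measurable
    show "(\<lambda>x. (s * (1 / (1 - s * x)) - t * (1 / (1 - t * x))) / (s - t)) \<in> borel_measurable \<mu>" by (rule meas) measurable
    show "AE x in \<mu>. 1 / (1 - s * x) * (1 / (1 - t * x)) = (s * (1 / (1 - s * x)) - t * (1 / (1 - t * x))) / (s - t)"
      using AEg[OF s] AEg[OF t]
    proof eventually_elim
      case (elim x)
      then have nz: "1 - s * x \<noteq> 0" "1 - t * x \<noteq> 0" "s - t \<noteq> 0" using st by auto
      then have "s * (1 / (1 - s * x)) - t * (1 / (1 - t * x)) = (s - t) * (1 / (1 - s * x) * (1 / (1 - t * x)))"
        by (simp add: divide_simps) (simp add: algebra_simps)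
      then show ?case using nz by simp
    qed
  qed
  also have "\<dots> = (\<integral>x. s * (1 / (1 - s * x)) - t * (1 / (1 - t * x)) \<partial>\<mu>) / (s - t)"
    by (rule integral_divide_zero)
  also have "(\<integral>x. s * (1 / (1 - s * x)) - t * (1 / (1 - t * x)) \<partial>\<mu>)
     = (\<integral>x. s * (1 / (1 - s * x)) \<partial>\<mu>) - (\<integral>x. t * (1 / (1 - t * x)) \<partial>\<mu>)"
    by (rule Bochner_Integration.integral_diff[OF int_gc[OF s] int_gc[OF t]])
  also have "(\<integral>x. s * (1 / (1 - s * x)) \<partial>\<mu>) = s * Mf \<mu> s"
    unfolding Mf_def by (rule integral_mult_right_zero)
  also have "(\<integral>x. t * (1 / (1 - t * x)) \<partial>\<mu>) = t * Mf \<mu> t"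
    unfolding Mf_def by (rule integral_mult_right_zero)
  finally show ?thesis .
qed

definition "M2 t = (\<integral>x. (1 / (1 - t * x))\<^sup>2 \<partial>\<mu>)"

lemma int_g2: "0 \<le> t \<Longrightarrow> t * B < 1 \<Longrightarrow> integrable \<mu> (\<lambda>x. (1 / (1 - t * x))\<^sup>2)"
proof -
  assume t: "0 \<le> t" "t * B < 1"
  show ?thesis
  proof (rule int_bdd[where C="(1 / (1 - t * B))\<^sup>2"])
    show "AE x in \<mu>. \<bar>(1 / (1 - t * x))\<^sup>2\<bar> \<le> (1 / (1 - t * B))\<^sup>2"
      using AEg[OF t] proof eventually_elim
      case (elim x) then show ?case by (simp add: power_mono)
    qed
  qed (rule meas, measurable)
qed

lemma variance: assumes "t \<in> Th" shows "(Mf \<mu> t)\<^sup>2 < M2 t"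
proof -
  from assms have t: "0 < t" "t * B < 1" by (auto simp: Th_def)
  define a where "a = Mf \<mu> t"
  have a: "0 < a" using M_pos t by (auto simp: a_def)
  have e: "(\<integral>x. (1 / (1 - t * x) - a)\<^sup>2 \<partial>\<mu>) = M2 t - a\<^sup>2"
  proof -
    have "(\<integral>x. (1 / (1 - t * x) - a)\<^sup>2 \<partial>\<mu>) = (\<integral>x. (1 / (1 - t * x))\<^sup>2 - 2 * a * (1 / (1 - t * x)) + a\<^sup>2 \<partial>\<mu>)"
      by (rule Bochner_Integration.integral_cong) (simp_all add: power2_diff field_simps)
    also have "\<dots> = (\<integral>x. (1 / (1 - t * x))\<^sup>2 - 2 * a * (1 / (1 - t * x)) \<partial>\<mu>) + (\<integral>x. a\<^sup>2 \<partial>\<mu>)"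
      using t by (intro Bochner_Integration.integral_add[OF Bochner_Integration.integrable_diff[OF int_g2 int_gc] P.integrable_const]) auto
    also have "(\<integral>x. (1 / (1 - t * x))\<^sup>2 - 2 * a * (1 / (1 - t * x)) \<partial>\<mu>)
       = (\<integral>x. (1 / (1 - t * x))\<^sup>2 \<partial>\<mu>) - (\<integral>x. 2 * a * (1 / (1 - t * x)) \<partial>\<mu>)"
      using t by (intro Bochner_Integration.integral_diff[OF int_g2 int_gc]) auto
    also have "(\<integral>x. 2 * a * (1 / (1 - t * x)) \<partial>\<mu>) = 2 * a * a"
      unfolding a_def Mf_def by (rule integral_mult_right_zero)
    also have "(\<integral>x. a\<^sup>2 \<partial>\<mu>) = a\<^sup>2" by (simp add: P.prob_space)
    finally show ?thesis unfolding M2_def by (simp add: power2_eq_square)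
  qed
  have int: "integrable \<mu> (\<lambda>x. (1 / (1 - t * x) - a)\<^sup>2)"
  proof -
    have "integrable \<mu> (\<lambda>x. (1 / (1 - t * x))\<^sup>2 - 2 * a * (1 / (1 - t * x)) + a\<^sup>2)"
      using t by (intro Bochner_Integration.integrable_add[OF Bochner_Integration.integrable_diff[OF int_g2 int_gc] P.integrable_const]) auto
    then show ?thesis by (simp add: power2_diff algebra_simps)
  qed
  have nn: "0 \<le> (\<integral>x. (1 / (1 - t * x) - a)\<^sup>2 \<partial>\<mu>)" by simp
  have "(\<integral>x. (1 / (1 - t * x) - a)\<^sup>2 \<partial>\<mu>) \<noteq> 0"
  proof
    assume "(\<integral>x. (1 / (1 - t * x) - a)\<^sup>2 \<partial>\<mu>) = 0"
    then have "AE x in \<mu>. (1 / (1 - t * x) - a)\<^sup>2 = 0"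
      using integral_nonneg_eq_0_iff_AE[OF int] by simp
    then have "AE x in \<mu>. x = (a - 1) / (a * t)"
      using AEg[OF less_imp_le[OF t(1)] t(2)]
    proof eventually_elim
      case (elim x)
      then have "1 / (1 - t * x) = a" "1 - t * x \<noteq> 0" by auto
      then have "1 = a * (1 - t * x)" by (simp add: field_simps)
      then show ?case using a t by (simp add: field_simps)
    qed
    then show False using nondeg by blast
  qed
  then show ?thesis using e nn unfolding a_def by linarith
qed

lemma nbhd: assumes "t \<in> Th"
  shows "\<exists>d>0. \<forall>s. \<bar>s - t\<bar> < d \<longrightarrow> 0 < s \<and> s * B \<le> (1 + t * B) / 2"
proof -
  from assms have t: "0 < t" "t * B < 1" by (auto simp: Th_def)
  define d where "d = min t ((1 - t * B) / (2 * (B + 1)))"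
  have d: "0 < d" using t B0 by (auto simp: d_def)
  have "0 < s \<and> s * B \<le> (1 + t * B) / 2" if "\<bar>s - t\<bar> < d" for s
  proof
    show "0 < s" using that d_def by auto
    have h1: "s * B \<le> (t + d) * B" using that B0 by (intro mult_right_mono) auto
    have h2: "d * B \<le> (1 - t * B) / (2 * (B + 1)) * B" using B0 by (intro mult_right_mono) (auto simp: d_def)
    have h3: "(1 - t * B) / (2 * (B + 1)) * B \<le> (1 - t * B) / 2"
      using B0 t by (simp add: field_simps)
    have h0: "(t + d) * B = t * B + d * B" by (simp add: algebra_simps)
    have h5: "(1 + t * B) / 2 = t * B + (1 - t * B) / 2" by (simp add: field_simps)
    show "s * B \<le> (1 + t * B) / 2" unfolding h5 using h0 h1 h2 h3 by linarith
  qed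
  then show ?thesis using d by blast
qed

lemma fm: "finite_measure \<mu>" using csk_prob by (simp add: prob_space_def)

lemma P_cont: assumes "t \<in> Th"
  shows "((\<lambda>s. \<integral>x. 1 / (1 - s * x) * (1 / (1 - t * x)) \<partial>\<mu>) \<longlongrightarrow> M2 t) (at t)"
proof -
  from assms have t: "0 < t" "t * B < 1" by (auto simp: Th_def)
  obtain d where d: "d > 0" "\<And>s. \<bar>s - t\<bar> < d \<Longrightarrow> 0 < s \<and> s * B \<le> (1 + t * B) / 2"
    using nbhd[OF assms] by blast
  have "((\<lambda>s. \<integral>x. 1 / (1 - s * x) * (1 / (1 - t * x)) \<partial>\<mu>) \<longlongrightarrow> (\<integral>x. 1 / (1 - t * x) * (1 / (1 - t * x)) \<partial>\<mu>)) (at t within ball t d)"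
  proof (rule dct_within[OF fm, where C="(2 / (1 - t * B)) * (1 / (1 - t * B))"])
    show "(\<lambda>x. 1 / (1 - s * x) * (1 / (1 - t * x))) \<in> borel_measurable \<mu>" for s by (rule meas) measurable
    show "(\<lambda>x. 1 / (1 - t * x) * (1 / (1 - t * x))) \<in> borel_measurable \<mu>" by (rule meas) measurable
    show "AE x in \<mu>. ((\<lambda>s. 1 / (1 - s * x) * (1 / (1 - t * x))) \<longlongrightarrow> 1 / (1 - t * x) * (1 / (1 - t * x))) (at t within ball t d)"
      using AEg[OF less_imp_le[OF t(1)] t(2)]
    proof eventually_elim
      case (elim x)
      then have "1 - t * x \<noteq> 0" by auto
      then show ?case by (intro tendsto_intros) auto
    qed
    show "AE x in \<mu>. norm (1 / (1 - s * x) * (1 / (1 - t * x))) \<le> 2 / (1 - t * B) * (1 / (1 - t * B))"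
      if "s \<in> ball t d" for s
    proof -
      have s: "0 < s" "s * B \<le> (1 + t * B) / 2" using d(2)[of s] that by (auto simp: dist_real_def abs_minus_commute)
      then have s2: "s * B < 1" using t by (auto simp: field_simps)
      have sb: "1 / (1 - s * B) \<le> 2 / (1 - t * B)" using s t by (simp add: field_simps)
      show ?thesis using AEg[OF less_imp_le[OF s(1)] s2] AEg[OF less_imp_le[OF t(1)] t(2)]
      proof eventually_elim
        case (elim x)
        then have "1 / (1 - s * x) * (1 / (1 - t * x)) \<le> 2 / (1 - t * B) * (1 / (1 - t * B))"
          using sb t by (intro mult_mono) auto
        moreover have "0 < 1 / (1 - s * x) * (1 / (1 - t * x))" using elim by simp
        ultimately show ?case by (simp only: real_norm_def abs_of_pos)
      qed
    qed
  qed
  moreover have "at t within ball t d = at t" by (rule at_within_open) (use d(1) in auto)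
  moreover have "(\<integral>x. 1 / (1 - t * x) * (1 / (1 - t * x)) \<partial>\<mu>) = M2 t"
    unfolding M2_def by (simp only: power2_eq_square)
  ultimately show ?thesis by (simp only:)
qed

lemma G_deriv: assumes "t \<in> Th" shows "DERIV (\<lambda>s. s * Mf \<mu> s) t :> M2 t"
proof -
  from assms have t: "0 < t" "t * B < 1" by (auto simp: Th_def)
  obtain d where d: "d > 0" "\<And>s. \<bar>s - t\<bar> < d \<Longrightarrow> 0 < s \<and> s * B \<le> (1 + t * B) / 2"
    using nbhd[OF assms] by blast
  define \<phi> where "\<phi> z = (if z = t then M2 t else (z * Mf \<mu> z - t * Mf \<mu> t) / (z - t))" for z
  have "(\<phi> \<longlongrightarrow> M2 t) (at t)"
  proof (rule Lim_transform_eventually[OF P_cont[OF assms]])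
    show "\<forall>\<^sub>F s in at t. (\<integral>x. 1 / (1 - s * x) * (1 / (1 - t * x)) \<partial>\<mu>) = \<phi> s"
      unfolding eventually_at
    proof (intro exI[of _ d] conjI ballI impI)
      fix s assume s: "s \<in> UNIV" "s \<noteq> t \<and> dist s t < d"
      then have "0 < s" "s * B \<le> (1 + t * B) / 2" using d(2)[of s] by (auto simp: dist_real_def)
      then have "0 \<le> s" "s * B < 1" using t by (auto simp: field_simps)
      then show "(\<integral>x. 1 / (1 - s * x) * (1 / (1 - t * x)) \<partial>\<mu>) = \<phi> s"
        using pf[of s t] t s by (simp add: \<phi>_def)
    qed (use d in auto)
  qed
  then have "isCont \<phi> t" by (simp add: isCont_def \<phi>_def)
  moreover have "\<forall>z. z * Mf \<mu> z - t * Mf \<mu> t = \<phi> z * (z - t)" by (simp add: \<phi>_def)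
  moreover have "\<phi> t = M2 t" by (simp add: \<phi>_def)
  ultimately show ?thesis unfolding CARAT_DERIV by blast
qed

lemma k_eq: "t \<in> Th \<Longrightarrow> kf \<mu> t = inverse t - inverse (t * Mf \<mu> t)"
proof -
  assume "t \<in> Th"
  then have t: "0 < t" "t * B < 1" by (auto simp: Th_def)
  then have "0 < Mf \<mu> t" using M_pos by auto
  then show ?thesis using t unfolding kf_def by (simp add: field_simps)
qed

definition "kd t = M2 t * inverse ((t * Mf \<mu> t)\<^sup>2) - inverse t ^ 2"

lemma kd_pos: "t \<in> Th \<Longrightarrow> 0 < kd t"
proof -
  assume a: "t \<in> Th"
  then have t: "0 < t" "t * B < 1" by (auto simp: Th_def)
  then have M: "0 < Mf \<mu> t" using M_pos by auto
  have "(Mf \<mu> t)\<^sup>2 < M2 t" by (rule variance[OF a])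
  then show ?thesis using t M unfolding kd_def by (simp add: field_simps power_mult_distrib)
qed

lemma k_deriv: assumes "t \<in> Th" shows "DERIV (kf \<mu>) t :> kd t"
proof -
  from assms have t: "0 < t" "t * B < 1" by (auto simp: Th_def)
  then have M: "0 < Mf \<mu> t" using M_pos by auto
  obtain d where d: "d > 0" "\<And>s. \<bar>s - t\<bar> < d \<Longrightarrow> 0 < s \<and> s * B \<le> (1 + t * B) / 2"
    using nbhd[OF assms] by blast
  have d1: "DERIV (\<lambda>s. inverse s) t :> - (inverse t ^ Suc (Suc 0))" by (rule DERIV_inverse) (use t in simp)
  have d2: "DERIV (\<lambda>s. inverse (s * Mf \<mu> s)) t :> - (M2 t * inverse ((t * Mf \<mu> t) ^ Suc (Suc 0)))"
    by (rule DERIV_inverse_fun[OF G_deriv[OF assms]]) (use t M in auto)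
  have d3: "DERIV (\<lambda>s. inverse s - inverse (s * Mf \<mu> s)) t :> kd t"
  proof -
    have e: "- (inverse t ^ Suc (Suc 0)) - - (M2 t * inverse ((t * Mf \<mu> t) ^ Suc (Suc 0))) = kd t"
      by (simp add: kd_def power2_eq_square inverse_mult_distrib algebra_simps)
    show ?thesis using DERIV_diff[OF d1 d2] unfolding e .
  qed
  have ev: "\<forall>\<^sub>F s in nhds t. kf \<mu> s = inverse s - inverse (s * Mf \<mu> s)"
    unfolding eventually_nhds_metric
  proof (intro exI[of _ d] conjI allI impI)
    fix s assume "dist s t < d"
    then have "0 < s" "s * B \<le> (1 + t * B) / 2" using d(2)[of s] by (auto simp: dist_real_def)
    then have "s \<in> Th" using t by (auto simp: Th_def)
    then show "kf \<mu> s = inverse s - inverse (s * Mf \<mu> s)" by (rule k_eq)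
  qed (use d in auto)
  show ?thesis using d3 DERIV_cong_ev[OF refl ev refl] by simp
qed

lemma k_mono: assumes "s \<in> Th" "t \<in> Th" "s < t" shows "kf \<mu> s < kf \<mu> t"
proof (rule DERIV_pos_imp_increasing[OF assms(3)])
  fix x assume "s \<le> x" "x \<le> t"
  then have "x \<in> Th" using assms by (auto simp: Th_def) (smt (verit) B0 mult_right_mono)
  then show "\<exists>y. DERIV (kf \<mu>) x :> y \<and> 0 < y" using k_deriv kd_pos by blast
qed

lemma k_inj: "inj_on (kf \<mu>) Th"
proof (rule inj_onI)
  fix s t assume "s \<in> Th" "t \<in> Th" "kf \<mu> s = kf \<mu> t"
  then show "s = t" using k_mono[of s t] k_mono[of t s] by (cases s t rule: linorder_cases) auto
qed

lemma M_lim0: "(Mf \<mu> \<longlongrightarrow> 1) (at_right 0)"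
proof -
  define c where "c = 1 / (2 * (B + 1))"
  have c: "0 < c" "c * B \<le> 1 / 2" using B0 by (auto simp: c_def field_simps)
  have "(Mf \<mu> \<longlongrightarrow> (\<integral>x. 1 \<partial>\<mu>)) (at 0 within {0<..<c})"
    unfolding Mf_def
  proof (rule dct_within[OF fm, where C=2])
    show "(\<lambda>x. 1 / (1 - s * x)) \<in> borel_measurable \<mu>" for s by (rule mg)
    show "(\<lambda>x. 1::real) \<in> borel_measurable \<mu>" by simp
    show "AE x in \<mu>. ((\<lambda>s. 1 / (1 - s * x)) \<longlongrightarrow> 1) (at 0 within {0<..<c})"
    proof (intro AE_I2)
      fix x
      have "((\<lambda>s. 1 / (1 - s * x)) \<longlongrightarrow> 1 / (1 - 0 * x)) (at 0 within {0<..<c})"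
        by (intro tendsto_intros) auto
      then show "((\<lambda>s. 1 / (1 - s * x)) \<longlongrightarrow> 1) (at 0 within {0<..<c})" by simp
    qed
    show "AE x in \<mu>. norm (1 / (1 - s * x)) \<le> 2" if "s \<in> {0<..<c}" for s
    proof -
      have s: "0 \<le> s" "s * B \<le> 1 / 2" using that c B0
        by auto (smt (verit) mult_right_mono)
      then have s2: "s * B < 1" by linarith
      have sb: "1 / (1 - s * B) \<le> 2" using s by (simp add: field_simps)
      show ?thesis using AEg[OF s(1) s2] by eventually_elim (use sb in auto)
    qed
  qed
  moreover have "at (0::real) within {0<..<c} = at_right 0"
    by (rule at_within_nhd[of 0 "{-c<..<c}"]) (use c in auto)
  ultimately show ?thesis by (simp add: P.prob_space)
qed

definition "F = (if B = 0 then at_top else at_left (1 / B))"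

lemma F_nontriv: "F \<noteq> bot"
  unfolding F_def by auto

lemma ev_Th: assumes "t0 \<in> Th" shows "eventually (\<lambda>t. t \<in> Th \<and> t0 < t) F"
proof (cases "B = 0")
  case True
  then show ?thesis using assms unfolding F_def Th_def
    by (auto intro: eventually_mono[OF eventually_gt_at_top[of t0]])
next
  case False
  then have B: "0 < B" using B0 by auto
  from assms have t0: "0 < t0" "t0 * B < 1" by (auto simp: Th_def)
  then have "t0 < 1 / B" using B by (simp add: field_simps)
  then have "eventually (\<lambda>t. t \<in> {t0<..<1/B}) (at_left (1 / B))" by (rule eventually_at_left_real)
  then show ?thesis using False t0 B unfolding F_def Th_def
    by (auto elim!: eventually_mono simp: field_simps)
qed

lemma Th_ne: "1 / (2 * (B + 1)) \<in> Th"
  using B0 by (auto simp: Th_def field_simps)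

lemma mono_lim:
  fixes f :: "real \<Rightarrow> real"
  assumes mono: "\<And>s t. s \<in> Th \<Longrightarrow> t \<in> Th \<Longrightarrow> s < t \<Longrightarrow> f s < f t"
    and bnd: "\<And>t. t \<in> Th \<Longrightarrow> f t \<le> C"
  shows "(f \<longlongrightarrow> Sup (f ` Th)) F"
proof (rule order_tendstoI)
  have ne: "f ` Th \<noteq> {}" using Th_ne by auto
  have bdd: "bdd_above (f ` Th)" using bnd by (auto intro!: bdd_aboveI)
  fix y assume "y < Sup (f ` Th)"
  then obtain t0 where t0: "t0 \<in> Th" "y < f t0" using less_cSup_iff[OF ne bdd] by auto
  show "eventually (\<lambda>t. y < f t) F"
    using ev_Th[OF t0(1)] by eventually_elim (use t0 mono in force)
next
  have bdd: "bdd_above (f ` Th)" using bnd by (auto intro!: bdd_aboveI)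
  fix y assume y: "Sup (f ` Th) < y"
  show "eventually (\<lambda>t. f t < y) F"
    using ev_Th[OF Th_ne] 
  proof eventually_elim
    case (elim t)
    then have "f t \<le> Sup (f ` Th)" using bdd by (intro cSup_upper) auto
    then show ?case using y by linarith
  qed
qed

lemma k_lim: "(kf \<mu> \<longlongrightarrow> Sup (kf \<mu> ` Th)) F"
  by (rule mono_lim[where C=B]) (auto intro: k_mono k_le)

lemma M2_pos: "t \<in> Th \<Longrightarrow> 0 < M2 t"
  using variance[of t] by (smt (verit) zero_le_power2)

lemma G_mono: assumes "s \<in> Th" "t \<in> Th" "s < t" shows "s * Mf \<mu> s < t * Mf \<mu> t"
proof (rule DERIV_pos_imp_increasing[OF assms(3)])
  fix x assume "s \<le> x" "x \<le> t"
  then have "x \<in> Th" using assms by (auto simp: Th_def) (smt (verit) B0 mult_right_mono)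
  then show "\<exists>y. DERIV (\<lambda>s. s * Mf \<mu> s) x :> y \<and> 0 < y" using G_deriv M2_pos by blast
qed


definition "Qd t1 = density \<mu> (\<lambda>x. ennreal (1 / (Mf \<mu> t1 * (1 - t1 * x))))"


lemma Q_csk: assumes t1: "t1 \<in> Th" shows "csk (Qd t1) B"
proof -
  from t1 have t: "0 \<le> t1" "t1 * B < 1" by (auto simp: Th_def)
  define a1 where "a1 = Mf \<mu> t1"
  have a1: "0 < a1" using M_pos[OF t] by (simp add: a1_def)
  define h where "h x = (1 / a1) * (1 / (1 - t1 * x))" for x
  have Qd: "Qd t1 = density \<mu> (\<lambda>x. ennreal (h x))"
    unfolding Qd_def h_def a1_def by (simp add: divide_divide_eq_left)
  have hm: "h \<in> borel_measurable \<mu>" unfolding h_def by (rule meas) measurable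
  have hpos: "AE x in \<mu>. 0 < h x" using AEg[OF t] by eventually_elim (use a1 in \<open>auto simp: h_def\<close>)
  have hint: "integrable \<mu> h" unfolding h_def by (rule int_gc[OF t])
  have hi: "(\<integral>x. h x \<partial>\<mu>) = 1"
  proof -
    have "(\<integral>x. h x \<partial>\<mu>) = (1 / a1) * Mf \<mu> t1" unfolding h_def Mf_def by (rule integral_mult_right_zero)
    then show ?thesis using a1 by (simp add: a1_def)
  qed
  show ?thesis
  proof (rule csk.intro)
    show "prob_space (Qd t1)"
    proof (rule prob_spaceI)
      have "emeasure (Qd t1) (space (Qd t1)) = (\<integral>\<^sup>+ x. ennreal (h x) * indicator (space \<mu>) x \<partial>\<mu>)"
        unfolding Qd using hm by (simp add: emeasure_density)
      also have "\<dots> = (\<integral>\<^sup>+ x. ennreal (h x) \<partial>\<mu>)"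
        by (rule nn_integral_cong) simp
      also have "\<dots> = ennreal (\<integral>x. h x \<partial>\<mu>)"
        by (rule nn_integral_eq_integral[OF hint]) (use hpos in \<open>eventually_elim, auto\<close>)
      finally show "emeasure (Qd t1) (space (Qd t1)) = 1" using hi by simp
    qed
    show "sets (Qd t1) = sets borel" unfolding Qd using sets_eq by simp
    show "0 \<le> B" by (rule B0)
    show "AE x in Qd t1. x \<le> B" unfolding Qd using hm AE_le
      by (subst AE_density) (auto elim: AE_mp)
    show "\<not> (AE x in Qd t1. x = c)" for c
    proof
      assume "AE x in Qd t1. x = c"
      then have "AE x in \<mu>. 0 < ennreal (h x) \<longrightarrow> x = c" unfolding Qd using hm
        by (subst (asm) AE_density) auto
      with hpos have "AE x in \<mu>. x = c" by eventually_elim auto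
      then show False using nondeg by blast
    qed
  qed
qed

lemma Q_M: assumes t1: "t1 \<in> Th" and s: "0 \<le> s" "s * B < 1"
  shows "Mf (Qd t1) s = (\<integral>x. 1 / (1 - t1 * x) * (1 / (1 - s * x)) \<partial>\<mu>) / Mf \<mu> t1"
proof -
  from t1 have t: "0 \<le> t1" "t1 * B < 1" by (auto simp: Th_def)
  define a1 where "a1 = Mf \<mu> t1"
  have a1: "0 < a1" using M_pos[OF t] by (simp add: a1_def)
  define h where "h x = (1 / a1) * (1 / (1 - t1 * x))" for x
  have Qd: "Qd t1 = density \<mu> (\<lambda>x. ennreal (h x))"
    unfolding Qd_def h_def a1_def by (simp add: divide_divide_eq_left)
  have hm: "h \<in> borel_measurable \<mu>" unfolding h_def by (rule meas) measurable
  have hpos: "AE x in \<mu>. 0 \<le> h x" using AEg[OF t] by eventually_elim (use a1 in \<open>auto simp: h_def\<close>)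
  have "Mf (Qd t1) s = (\<integral>x. h x *\<^sub>R (1 / (1 - s * x)) \<partial>\<mu>)"
    unfolding Mf_def Qd by (rule integral_density[OF mg hm hpos])
  also have "\<dots> = (\<integral>x. (1 / a1) * (1 / (1 - t1 * x) * (1 / (1 - s * x))) \<partial>\<mu>)"
    by (simp only: h_def real_scaleR_def mult.assoc)
  also have "\<dots> = (1 / a1) * (\<integral>x. 1 / (1 - t1 * x) * (1 / (1 - s * x)) \<partial>\<mu>)"
    by (rule integral_mult_right_zero)
  finally show ?thesis by (simp add: a1_def)
qed

end

lemma Gf_eq: "b \<noteq> 0 \<Longrightarrow> Gf \<mu> b = (1 / b) * Mf \<mu> (1 / b)"
proof -
  assume b: "b \<noteq> 0"
  have "Gf \<mu> b = (\<integral>x. (1 / b) * (1 / (1 - (1 / b) * x)) \<partial>\<mu>)"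
    unfolding Gf_def
  proof (rule Bochner_Integration.integral_cong[OF refl])
    fix x show "1 / (b - x) = 1 / b * (1 / (1 - 1 / b * x))"
      using b by (cases "b = x") (simp_all add: field_simps)
  qed
  also have "\<dots> = (1 / b) * Mf \<mu> (1 / b)" unfolding Mf_def by (rule integral_mult_right_zero)
  finally show ?thesis .
qed

lemma AE_le_supp:
  assumes prob: "prob_space \<nu>" and borel: "sets \<nu> = sets borel" and bdd: "bdd_above (supp \<nu>)"
  shows "AE x in \<nu>. x \<le> Bnd \<nu>"
proof -
  interpret prob_space \<nu> by fact
  define I where "I = {p :: real \<times> real. fst p \<in> \<rat> \<and> snd p \<in> \<rat> \<and> measure \<nu> {fst p<..<snd p} = 0}"
  have cI: "countable I"
  proof -
    have "I \<subseteq> \<rat> \<times> \<rat>" by (auto simp: I_def)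
    moreover have "countable (\<rat> \<times> (\<rat> :: real set))" by (intro countable_SIGMA countable_rat)
    ultimately show ?thesis by (rule countable_subset)
  qed
  have null: "(\<Union>p\<in>I. {fst p<..<snd p}) \<in> null_sets \<nu>"
  proof (rule null_sets_UN'[OF cI])
    fix p assume "p \<in> I"
    then have m: "measure \<nu> {fst p<..<snd p} = 0" by (auto simp: I_def)
    have s: "{fst p<..<snd p} \<in> sets \<nu>" using borel by simp
    then show "{fst p<..<snd p} \<in> null_sets \<nu>" using m
      by (simp add: emeasure_eq_measure null_sets_def)
  qed
  have sub: "{x \<in> space \<nu>. \<not> x \<le> Bnd \<nu>} \<subseteq> (\<Union>p\<in>I. {fst p<..<snd p})"
  proof
    fix x assume "x \<in> {x \<in> space \<nu>. \<not> x \<le> Bnd \<nu>}"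
    then have x: "Bnd \<nu> < x" by auto
    have "x \<notin> supp \<nu>"
    proof
      assume "x \<in> supp \<nu>"
      then have "x \<le> Sup (supp \<nu>)" using bdd by (rule cSup_upper)
      then show False using x unfolding Bnd_def by linarith
    qed
    then obtain e where e: "e > 0" "\<not> measure \<nu> {x - e<..<x + e} > 0" unfolding supp_def by auto
    then have m0: "measure \<nu> {x - e<..<x + e} = 0" using measure_nonneg[of \<nu>] by (meson not_less order_antisym)
    obtain a where a: "a \<in> \<rat>" "x - e < a" "a < x" using Rats_dense_in_real[of "x - e" x] e by auto
    obtain b where b: "b \<in> \<rat>" "x < b" "b < x + e" using Rats_dense_in_real[of x "x + e"] e by auto
    have "measure \<nu> {a<..<b} \<le> measure \<nu> {x - e<..<x + e}"
      using a b borel by (intro finite_measure_mono) auto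
    then have "measure \<nu> {a<..<b} = 0" using m0 measure_nonneg[of \<nu> "{a<..<b}"] by linarith
    then have "(a, b) \<in> I" using a b by (auto simp: I_def)
    then show "x \<in> (\<Union>p\<in>I. {fst p<..<snd p})" using a b by force
  qed
  show ?thesis by (rule AE_I'[OF null sub])
qed



lemma alg_W:
  fixes t a M2 :: real assumes t: "0 < t" and a: "0 < a" and M: "a\<^sup>2 < M2"
  shows "- (inverse (M2 * inverse ((t * a)\<^sup>2) - inverse t ^ 2) * inverse (t ^ Suc (Suc 0))) - 1 = - M2 / (M2 - a\<^sup>2)"
proof -
  have K: "M2 * inverse ((t * a)\<^sup>2) - inverse t ^ 2 = (M2 - a\<^sup>2) / (t\<^sup>2 * a\<^sup>2)"
    using t a by (simp add: field_simps power2_eq_square)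
  have nz: "M2 - a\<^sup>2 \<noteq> 0" using M by simp
  have "inverse ((M2 - a\<^sup>2) / (t\<^sup>2 * a\<^sup>2)) * inverse (t ^ Suc (Suc 0)) = a\<^sup>2 / (M2 - a\<^sup>2)"
    using t a nz by (simp add: field_simps power2_eq_square)
  then show ?thesis unfolding K using nz by (simp add: field_simps)
qed

lemma alg_b:
  fixes t a M2 m1 W :: real
  assumes t: "0 < t" and a: "0 < a" and M: "a\<^sup>2 < M2" and m1: "m1 = (a - 1) / (t * a)" "m1 \<noteq> 0"
    and W: "W = - M2 / (M2 - a\<^sup>2)"
  shows "(M2 - a) / (t * M2) = (2 * m1 * (m1 * (1 / t - m1)) - m1\<^sup>2 * (m1 * W + 1 * (1 / t - m1)))
           / (m1 * (1 / t - m1) - m1 * (m1 * W + 1 * (1 / t - m1)))"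
proof -
  define r where "r = 1 / t - m1"
  have r: "r = 1 / (t * a)" using t a unfolding r_def m1 by (simp add: field_simps)
  have M2: "0 < M2" using M by (smt (verit) zero_le_power2)
  have nz: "M2 - a\<^sup>2 \<noteq> 0" using M by simp
  have W0: "W \<noteq> 0" using W M2 nz by simp
  have den: "m1 * r - m1 * (m1 * W + 1 * r) = - (m1\<^sup>2 * W)" by (simp add: algebra_simps power2_eq_square)
  have num: "2 * m1 * (m1 * r) - m1\<^sup>2 * (m1 * W + 1 * r) = m1\<^sup>2 * (r - m1 * W)" by (simp add: algebra_simps power2_eq_square)
  have "(2 * m1 * (m1 * r) - m1\<^sup>2 * (m1 * W + 1 * r)) / (m1 * r - m1 * (m1 * W + 1 * r)) = (r - m1 * W) / (- W)"
    unfolding den num using m1(2) by simp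
  also have "\<dots> = (M2 - a) / (t * M2)"
    unfolding r W m1(1) using t a M2 nz by (simp add: field_simps power2_eq_square)
  finally show ?thesis unfolding r_def ..
qed

lemma alg_d:
  fixes t M2 W :: real assumes t: "0 < t" and M: "1 < M2" and W: "W = - M2 / (M2 - 1)"
  shows "(M2 - 1) / (t * M2) = 0 - (1 / t - 0) / W"
  using t M unfolding W by (simp add: field_simps)

lemma alg_c:
  fixes t a t1 a1 m m1 :: real
  assumes t: "0 < t" "0 < a" "0 < t1" "0 < a1" and ne: "t * a \<noteq> t1 * a1"
    and m: "m = (a - 1) / (t * a)" and m1: "m1 = (a1 - 1) / (t1 * a1)"
  shows "(a1 - a) / (t1 * a1 - t * a) = (m * (1 / t1 - m1) - m1 * (1 / t - m)) / ((1 / t1 - m1) - (1 / t - m))"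
proof -
  have r: "1 / t - m = 1 / (t * a)" "1 / t1 - m1 = 1 / (t1 * a1)" using t unfolding m m1 by (simp_all add: field_simps)
  have ne': "t1 * a1 - t * a \<noteq> 0" using ne by simp
  show ?thesis unfolding r unfolding m m1 using t ne ne' by (simp add: field_simps)
qed

lemma alg_a:
  fixes t a t1 a1 m m1 :: real
  assumes t: "0 < t" "0 < a" "0 < t1" "0 < a1" and ne: "t * a \<noteq> t1 * a1"
    and m: "m = (a - 1) / (t * a)" and m1: "m1 = (a1 - 1) / (t1 * a1)" and nz: "m \<noteq> 0" "m1 \<noteq> 0"
  shows "(a1 - a) / (t1 * a1 - t * a) = (m\<^sup>2 * (m1 * (1 / t1 - m1)) - m1\<^sup>2 * (m * (1 / t - m))) / (m * (m1 * (1 / t1 - m1)) - m1 * (m * (1 / t - m)))"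
proof -
  have e1: "m\<^sup>2 * (m1 * (1 / t1 - m1)) - m1\<^sup>2 * (m * (1 / t - m)) = (m * m1) * (m * (1 / t1 - m1) - m1 * (1 / t - m))"
    by (simp add: algebra_simps power2_eq_square)
  have e2: "m * (m1 * (1 / t1 - m1)) - m1 * (m * (1 / t - m)) = (m * m1) * ((1 / t1 - m1) - (1 / t - m))"
    by (simp add: algebra_simps)
  show ?thesis unfolding e1 e2 using nz alg_c[OF t ne m m1] by simp
qed

lemma alg_k1:
  fixes s t1 a1 M :: real
  assumes nz: "s \<noteq> 0" "t1 - s \<noteq> 0" "a1 \<noteq> 0" "t1 * a1 - s * M \<noteq> 0"
  shows "((t1 * a1 - s * M) / ((t1 - s) * a1) - 1) / (s * ((t1 * a1 - s * M) / ((t1 - s) * a1)))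
         = (a1 - M) / (t1 * a1 - s * M)"
proof -
  define D where "D = (t1 - s) * a1"
  have D: "D \<noteq> 0" using nz by (simp add: D_def)
  have e1: "(t1 * a1 - s * M) / D - 1 = (s * (a1 - M)) / D"
    using D by (simp add: field_simps D_def)
  have "((s * (a1 - M)) / D) / (s * ((t1 * a1 - s * M) / D)) = (a1 - M) / (t1 * a1 - s * M)"
    using D nz by (simp add: field_simps)
  then show ?thesis unfolding D_def[symmetric] e1 .
qed



theorem theorem2p3:
  fixes \<nu> :: "real measure" and m1 m :: real
  assumes prob: "prob_space \<nu>"
    and borel: "sets \<nu> = sets borel"
    and nondeg: "\<not> (\<exists>c. measure \<nu> {c} = 1)"
    and bdd: "bdd_above (supp \<nu>)"
    and m1_dom: "m1 \<in> kf \<nu> ` Theta \<nu>"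
    and m_dom: "m \<in> kf \<nu> ` Theta \<nu>"
  defines "k1 \<equiv> kf (Qf \<nu> m1)"
    and "psi1 \<equiv> the_inv_into (Theta \<nu>) (kf (Qf \<nu> m1))"
  defines "mbar \<equiv> k1 (psif \<nu> m)"
  shows
    "(m \<noteq> m1 \<and> m \<noteq> 0 \<and> m1 \<noteq> 0 \<longrightarrow>
        mbar = (m\<^sup>2 * Vf \<nu> m1 - m1\<^sup>2 * Vf \<nu> m) / (m * Vf \<nu> m1 - m1 * Vf \<nu> m))
     \<and> (m = m1 \<and> m1 \<noteq> 0 \<longrightarrow>
        mbar = (2 * m1 * Vf \<nu> m1 - m1\<^sup>2 * deriv (Vf \<nu>) m1)
               / (Vf \<nu> m1 - m1 * deriv (Vf \<nu>) m1))
     \<and> (m \<noteq> m1 \<and> m * m1 = 0 \<longrightarrow>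
        mbar = (m * Vratio \<nu> m1 - m1 * Vratio \<nu> m) / (Vratio \<nu> m1 - Vratio \<nu> m))
     \<and> (m = m1 \<and> m1 = 0 \<longrightarrow>
        mbar = m1 - Vratio \<nu> m1 / deriv (Vratio \<nu>) m1)
     \<and> (k1 \<longlongrightarrow> m1) (at_right 0)
     \<and> (\<exists>R. ((\<lambda>b. (mplus \<nu> * Gf \<nu> b - m1 * (1 / Vratio \<nu> m1))
                    / (Gf \<nu> b - 1 / Vratio \<nu> m1)) \<longlongrightarrow> R) (at_right (Bnd \<nu>))
            \<and> (k1 \<longlongrightarrow> R) (theta_plus_filter \<nu>))
     \<and> (1 / psi1 mbar - mbar) + mbar = Vratio \<nu> m + m"
proof -
  define B where "B = Bnd \<nu>"
  have B0: "0 \<le> B" unfolding B_def Bnd_def by simp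
  have AEle: "AE x in \<nu>. x \<le> B" unfolding B_def by (rule AE_le_supp[OF prob borel bdd])
  have nd: "\<not> (AE x in \<nu>. x = c)" for c
  proof
    assume ae: "AE x in \<nu>. x = c"
    interpret prob_space \<nu> by (rule prob)
    have sp: "space \<nu> = UNIV" using sets_eq_imp_space_eq[OF borel] by simp
    have "{x \<in> space \<nu>. x = c} = {c}" using sp by auto
    moreover have "{c} \<in> sets \<nu>" using borel by simp
    ultimately have "prob {x \<in> space \<nu>. x = c} = 1" using prob_Collect_eq_1[of "\<lambda>x. x = c"] ae by simp
    then show False using nondeg \<open>{x \<in> space \<nu>. x = c} = {c}\<close> by auto
  qed
  interpret csk \<nu> B by (rule csk.intro[OF prob borel B0 AEle nd])
  have Theta: "Theta \<nu> = Th" unfolding Theta_def Th_def B_def[symmetric] ..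
  have Fe: "theta_plus_filter \<nu> = F" unfolding theta_plus_filter_def F_def B_def[symmetric] ..
  have psi: "psif \<nu> y = the_inv_into Th (kf \<nu>) y" for y by (simp add: psif_def Theta)
  have psi_in: "y \<in> kf \<nu> ` Th \<Longrightarrow> psif \<nu> y \<in> Th \<and> kf \<nu> (psif \<nu> y) = y" for y
    unfolding psi using k_inj by (auto intro: the_inv_into_into f_the_inv_into_f)
  have psi_k: "s \<in> Th \<Longrightarrow> psif \<nu> (kf \<nu> s) = s" for s
    unfolding psi using k_inj by (rule the_inv_into_f_f)
  define t where "t = psif \<nu> m"
  define t1 where "t1 = psif \<nu> m1"
  have t: "t \<in> Th" "kf \<nu> t = m" using psi_in[of m] m_dom Theta unfolding t_def by auto
  have t1: "t1 \<in> Th" "kf \<nu> t1 = m1" using psi_in[of m1] m1_dom Theta unfolding t1_def by auto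
  have tp: "0 < t" "t * B < 1" "0 < t1" "t1 * B < 1" using t(1) t1(1) by (auto simp: Th_def)
  define a where "a = Mf \<nu> t"
  define a1 where "a1 = Mf \<nu> t1"
  have ap: "0 < a" "0 < a1" using M_pos tp unfolding a_def a1_def by auto
  have m_eq: "m = (a - 1) / (t * a)" using t(2) unfolding kf_def a_def by simp
  have m1_eq: "m1 = (a1 - 1) / (t1 * a1)" using t1(2) unfolding kf_def a1_def by simp
  have Vr: "Vratio \<nu> m = 1 / t - m" unfolding Vratio_def t_def ..
  have Vr1: "Vratio \<nu> m1 = 1 / t1 - m1" unfolding Vratio_def t1_def ..
  have Vf1: "Vf \<nu> m1 = m1 * (1 / t1 - m1)" unfolding Vf_def t1_def ..
  have Vfm: "Vf \<nu> m = m * (1 / t - m)" unfolding Vf_def t_def ..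
  have Qe: "Qf \<nu> m1 = Qd t1" unfolding Qf_def Pf_def Qd_def t1_def ..
  interpret Q: csk "Qd t1" B by (rule Q_csk[OF t1(1)])
  have QTh: "Q.Th = Th" by (simp add: Q.Th_def Th_def)
  have QF: "Q.F = F" by (simp add: Q.F_def F_def)
  have MQ: "Mf (Qd t1) s = (t1 * a1 - s * Mf \<nu> s) / ((t1 - s) * a1)" if "s \<in> Th" "s \<noteq> t1" for s
  proof -
    have s: "0 \<le> s" "s * B < 1" using that by (auto simp: Th_def)
    show ?thesis unfolding Q_M[OF t1(1) s] pf[OF less_imp_le[OF tp(3)] tp(4) s not_sym[OF that(2)]] using that
      by (simp add: a1_def)
  qed
  have MQ1: "Mf (Qd t1) t1 = M2 t1 / a1"
    unfolding Q_M[OF t1(1) less_imp_le[OF tp(3)] tp(4)] M2_def a1_def by (simp add: power2_eq_square)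
  have k1form: "kf (Qd t1) s = (a1 - Mf \<nu> s) / (t1 * a1 - s * Mf \<nu> s)" if "s \<in> Th" "s \<noteq> t1" for s
  proof -
    have s: "0 < s" "s * B < 1" using that by (auto simp: Th_def)
    have pos: "0 < Mf (Qd t1) s" using Q.M_pos[of s] s by auto
    have ne: "t1 - s \<noteq> 0" using that by simp
    have N: "t1 * a1 - s * Mf \<nu> s \<noteq> 0" using pos unfolding MQ[OF that] by auto
    show ?thesis unfolding kf_def MQ[OF that] using s ne N ap by (intro alg_k1) auto
  qed
  have k1t1: "kf (Qd t1) t1 = (M2 t1 - a1) / (t1 * M2 t1)"
  proof -
    have "0 < M2 t1" using M2_pos[OF t1(1)] .
    then show ?thesis unfolding kf_def MQ1 using ap tp by (simp add: field_simps)
  qed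
  have mbar_eq: "kf (Qf \<nu> m1) (psif \<nu> m) = kf (Qd t1) t" unfolding Qe t_def ..
  have iii: "(1 / the_inv_into (Theta \<nu>) (kf (Qf \<nu> m1)) (kf (Qf \<nu> m1) (psif \<nu> m)) - kf (Qf \<nu> m1) (psif \<nu> m))
      + kf (Qf \<nu> m1) (psif \<nu> m) = Vratio \<nu> m + m"
  proof -
    have e: "the_inv_into Th (kf (Qd t1)) (kf (Qd t1) t) = t"
      by (rule the_inv_into_f_f[OF Q.k_inj t(1)])
    show ?thesis unfolding mbar_eq unfolding Qe Theta e Vr by (simp only: diff_add_cancel)
  qed
  have ineq: "kf (Qd t1) t = (a1 - a) / (t1 * a1 - t * a) \<and> t * a \<noteq> t1 * a1" if "m \<noteq> m1"
  proof -
    have ne: "t \<noteq> t1" using that t(2) t1(2) by auto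
    have pos: "0 < Mf (Qd t1) t" using Q.M_pos[of t] tp by auto
    then have "t * a \<noteq> t1 * a1" unfolding MQ[OF t(1) ne] a_def by auto
    then show ?thesis using k1form[OF t(1) ne] unfolding a_def by simp
  qed
  have ia: "m \<noteq> m1 \<and> m \<noteq> 0 \<and> m1 \<noteq> 0 \<longrightarrow>
        kf (Qf \<nu> m1) (psif \<nu> m) = (m\<^sup>2 * Vf \<nu> m1 - m1\<^sup>2 * Vf \<nu> m) / (m * Vf \<nu> m1 - m1 * Vf \<nu> m)"
  proof
    assume h: "m \<noteq> m1 \<and> m \<noteq> 0 \<and> m1 \<noteq> 0"
    have ne: "t * a \<noteq> t1 * a1" and e: "kf (Qd t1) t = (a1 - a) / (t1 * a1 - t * a)" using ineq h by auto
    show "kf (Qf \<nu> m1) (psif \<nu> m) = (m\<^sup>2 * Vf \<nu> m1 - m1\<^sup>2 * Vf \<nu> m) / (m * Vf \<nu> m1 - m1 * Vf \<nu> m)"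
      unfolding mbar_eq Vf1 Vfm e using h by (intro alg_a[OF tp(1) ap(1) tp(3) ap(2) ne m_eq m1_eq]) auto
  qed
  have ic: "m \<noteq> m1 \<and> m * m1 = 0 \<longrightarrow>
        kf (Qf \<nu> m1) (psif \<nu> m) = (m * Vratio \<nu> m1 - m1 * Vratio \<nu> m) / (Vratio \<nu> m1 - Vratio \<nu> m)"
  proof
    assume h: "m \<noteq> m1 \<and> m * m1 = 0"
    have ne: "t * a \<noteq> t1 * a1" and e: "kf (Qd t1) t = (a1 - a) / (t1 * a1 - t * a)" using ineq h by auto
    show "kf (Qf \<nu> m1) (psif \<nu> m) = (m * Vratio \<nu> m1 - m1 * Vratio \<nu> m) / (Vratio \<nu> m1 - Vratio \<nu> m)"
      unfolding mbar_eq Vr Vr1 e by (rule alg_c[OF tp(1) ap(1) tp(3) ap(2) ne m_eq m1_eq])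
  qed
  have ii1: "(kf (Qf \<nu> m1) \<longlongrightarrow> m1) (at_right 0)"
  proof -
    have lim: "((\<lambda>s. (a1 - Mf \<nu> s) / (t1 * a1 - s * Mf \<nu> s)) \<longlongrightarrow> (a1 - 1) / (t1 * a1 - 0 * 1)) (at_right 0)"
      by (intro tendsto_intros M_lim0) (use ap tp in auto)
    have e: "(a1 - 1) / (t1 * a1 - 0 * 1) = m1" using m1_eq by simp
    have ev: "\<forall>\<^sub>F s in at_right 0. (a1 - Mf \<nu> s) / (t1 * a1 - s * Mf \<nu> s) = kf (Qf \<nu> m1) s"
      using eventually_at_right_real[OF tp(3)]
    proof eventually_elim
      case (elim s)
      then have "s * B \<le> t1 * B" using B0 by (intro mult_right_mono) auto
      then have "s \<in> Th" "s \<noteq> t1" using elim tp by (auto simp: Th_def)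
      then show ?case unfolding Qe using k1form by simp
    qed
    show ?thesis using Lim_transform_eventually[OF lim ev] unfolding e .
  qed
  have ii2: "\<exists>R. ((\<lambda>b. (mplus \<nu> * Gf \<nu> b - m1 * (1 / Vratio \<nu> m1))
                    / (Gf \<nu> b - 1 / Vratio \<nu> m1)) \<longlongrightarrow> R) (at_right (Bnd \<nu>))
            \<and> (kf (Qf \<nu> m1) \<longlongrightarrow> R) (theta_plus_filter \<nu>)"
  proof -
    define S where "S = Sup (kf \<nu> ` Th)"
    have mp: "mplus \<nu> = S" unfolding mplus_def Fe S_def
      by (rule tendsto_Lim[OF _ k_lim]) (use F_nontriv in simp)
    define R where "R = Sup (kf (Qd t1) ` Th)"
    have k1lim: "(kf (Qd t1) \<longlongrightarrow> R) F" unfolding R_def by (rule Q.k_lim)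
    define c1 where "c1 = t1 * a1"
    have c1: "0 < c1" using tp ap by (simp add: c1_def)
    have Vr1': "1 / Vratio \<nu> m1 = c1" unfolding Vr1 using tp ap by (simp add: m1_eq c1_def field_simps)
    have m1c1: "m1 * c1 = a1 - 1" unfolding m1_eq c1_def using tp ap by (simp add: field_simps)
    define T where "T b = (S * Gf \<nu> b - m1 * c1) / (Gf \<nu> b - c1)" for b
    obtain t0 where t0: "t0 \<in> Th" "t1 < t0" using eventually_happens'[OF F_nontriv ev_Th[OF t1(1)]] by auto
    define \<delta> where "\<delta> = t0 * Mf \<nu> t0 - c1"
    have \<delta>: "0 < \<delta>" using G_mono[OF t1(1) t0] unfolding \<delta>_def c1_def a1_def by simp
    define C where "C = 1 + c1 / \<delta>"
    have diff: "\<forall>\<^sub>F s in F. norm (kf (Qd t1) s - T (1 / s)) \<le> C * norm (kf \<nu> s - S)"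
      using ev_Th[OF t0(1)]
    proof eventually_elim
      case (elim s)
      then have sTh: "s \<in> Th" and ts: "t0 < s" by auto
      have sne: "s \<noteq> t1" using ts t0 by auto
      have sp: "0 < s" using sTh by (simp add: Th_def)
      have Mp: "0 < Mf \<nu> s" using M_pos sTh by (auto simp: Th_def)
      define G where "G = s * Mf \<nu> s"
      have Gge: "\<delta> < G - c1" using G_mono[OF t0(1) sTh ts] unfolding \<delta>_def G_def by simp
      then have Gc: "0 < G - c1" using \<delta> by linarith
      have Gf: "Gf \<nu> (1 / s) = G" using Gf_eq[of "1 / s" \<nu>] sp by (simp add: G_def)
      have kG: "kf \<nu> s * G = Mf \<nu> s - 1" unfolding kf_def G_def using Mp sp by (simp add: field_simps)
      have k1s: "kf (Qd t1) s = (Mf \<nu> s - a1) / (G - c1)"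
        unfolding k1form[OF sTh sne] G_def c1_def using Gc unfolding G_def c1_def
        by (simp add: field_simps)
      have eq: "kf (Qd t1) s - T (1 / s) = (kf \<nu> s - S) * (G / (G - c1))"
      proof -
        have "kf (Qd t1) s - T (1 / s) = ((Mf \<nu> s - a1) - (S * G - (a1 - 1))) / (G - c1)"
          unfolding k1s T_def Gf m1c1 by (simp only: diff_divide_distrib)
        also have "(Mf \<nu> s - a1) - (S * G - (a1 - 1)) = (kf \<nu> s - S) * G"
          using kG by (simp add: algebra_simps)
        finally show ?thesis by simp
      qed
      have Gpos: "0 < G" using Gc c1 by linarith
      have q1: "0 \<le> G / (G - c1)" using Gpos Gc by simp
      have q2: "G / (G - c1) \<le> C"
      proof -
        have "G / (G - c1) = 1 + c1 / (G - c1)" using Gc by (simp add: field_simps)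
        also have "c1 / (G - c1) \<le> c1 / \<delta>" using c1 \<delta> Gge by (intro divide_left_mono) auto
        finally show ?thesis unfolding C_def by simp
      qed
      have "norm (kf (Qd t1) s - T (1 / s)) = norm (kf \<nu> s - S) * (G / (G - c1))"
        unfolding eq real_norm_def abs_mult using Gpos Gc by simp
      also have "\<dots> \<le> norm (kf \<nu> s - S) * C" using q2 by (intro mult_left_mono) auto
      finally show ?case by (simp add: mult.commute)
    qed
    have z: "((\<lambda>s. C * norm (kf \<nu> s - S)) \<longlongrightarrow> 0) F"
    proof -
      have "((\<lambda>s. kf \<nu> s - S) \<longlongrightarrow> 0) F" using k_lim unfolding S_def by (rule LIM_zero)
      then have "((\<lambda>s. norm (kf \<nu> s - S)) \<longlongrightarrow> 0) F" by (rule tendsto_norm_zero)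
      then show ?thesis by (rule tendsto_mult_right_zero)
    qed
    have d0: "((\<lambda>s. kf (Qd t1) s - T (1 / s)) \<longlongrightarrow> 0) F" by (rule Lim_null_comparison[OF diff z])
    have Tinv: "((\<lambda>s. T (1 / s)) \<longlongrightarrow> R) F"
      using tendsto_diff[OF k1lim d0] by simp
    have fl: "filterlim (\<lambda>b. 1 / b) F (at_right B)"
    proof (cases "B = 0")
      case True
      have "F = at_top" unfolding F_def using True by simp
      then show ?thesis using filterlim_inverse_at_top_right True by (simp add: inverse_eq_divide)
    next
      case False
      then have Bp: "0 < B" using B0 by simp
      have ev: "\<forall>\<^sub>F b in at_right B. 1 / b \<in> {..<1 / B} \<and> 1 / b \<noteq> 1 / B"
        using eventually_at_right_real[of B "B + 1", OF less_add_one]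
      proof eventually_elim
        case (elim b)
        then have "1 / b < 1 / B" using Bp by (intro divide_strict_left_mono) auto
        then show ?case by auto
      qed
      have "((\<lambda>b. 1 / b) \<longlongrightarrow> 1 / B) (at_right B)" using False by (intro tendsto_intros) auto
      moreover have "F = at_left (1 / B)" unfolding F_def using False by simp
      ultimately show ?thesis using ev by (simp add: filterlim_at)
    qed
    have "((\<lambda>b. T (1 / (1 / b))) \<longlongrightarrow> R) (at_right B)" by (rule filterlim_compose[OF Tinv fl])
    then have TR: "(T \<longlongrightarrow> R) (at_right B)" by simp
    have lam: "(\<lambda>b. (mplus \<nu> * Gf \<nu> b - m1 * (1 / Vratio \<nu> m1)) / (Gf \<nu> b - 1 / Vratio \<nu> m1)) = T"
      unfolding mp Vr1' T_def ..
    show ?thesis unfolding lam Qe Fe B_def[symmetric] using TR k1lim by blast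
  qed
  obtain d where d: "d > 0" "\<And>s. \<bar>s - t1\<bar> < d \<Longrightarrow> 0 < s \<and> s * B \<le> (1 + t1 * B) / 2"
    using nbhd[OF t1(1)] by blast
  define e where "e = d / 2"
  have e: "0 < e" using d by (simp add: e_def)
  have hTh: "z \<in> Th" if "\<bar>z - t1\<bar> \<le> e" for z
  proof -
    have "\<bar>z - t1\<bar> < d" using that d e_def by simp
    then have "0 < z" "z * B \<le> (1 + t1 * B) / 2" using d(2) by auto
    then show ?thesis using tp by (auto simp: Th_def field_simps)
  qed
  have kcont: "isCont (kf \<nu>) z" if "\<bar>z - t1\<bar> \<le> e" for z
    using k_deriv[OF hTh[OF that]] by (rule DERIV_isCont)
  define lo where "lo = kf \<nu> (t1 - e)"
  define hi where "hi = kf \<nu> (t1 + e)"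
  have lohi: "lo < m1" "m1 < hi" unfolding lo_def hi_def t1(2)[symmetric]
    using e by (auto intro!: k_mono hTh)
  have inv: "kf \<nu> (psif \<nu> y) = y" if "lo < y" "y < hi" for y
  proof -
    have "continuous_on {t1 - e .. t1 + e} (kf \<nu>)"
      by (intro continuous_at_imp_continuous_on ballI kcont) auto
    moreover have "kf \<nu> (t1 - e) \<le> y" "y \<le> kf \<nu> (t1 + e)" using that unfolding lo_def hi_def by auto
    ultimately obtain x where x: "t1 - e \<le> x" "x \<le> t1 + e" "kf \<nu> x = y"
      using IVT'[of "kf \<nu>" "t1 - e" y "t1 + e"] e by auto
    then have "x \<in> Th" by (intro hTh) auto
    then have "y \<in> kf \<nu> ` Th" using x by auto
    then show ?thesis using psi_in by blast
  qed
  have pcont: "isCont (psif \<nu>) m1"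
  proof -
    have "isCont (psif \<nu>) (kf \<nu> t1)"
      by (rule isCont_inverse_function[where f="kf \<nu>" and g="psif \<nu>", OF e]) (auto intro: psi_k hTh kcont)
    then show ?thesis using t1(2) by simp
  qed
  have dpsi: "DERIV (psif \<nu>) m1 :> inverse (kd t1)"
  proof (rule DERIV_inverse_function[OF _ _ lohi inv pcont])
    show "DERIV (kf \<nu>) (psif \<nu> m1) :> kd t1" unfolding t1_def[symmetric] by (rule k_deriv[OF t1(1)])
    show "kd t1 \<noteq> 0" using kd_pos[OF t1(1)] by simp
  qed auto
  have dinv: "DERIV (\<lambda>y. 1 / psif \<nu> y) m1 :> - (inverse (kd t1) * inverse (t1 ^ Suc (Suc 0)))"
  proof -
    have "DERIV (\<lambda>y. inverse (psif \<nu> y)) m1 :> - (inverse (kd t1) * inverse (psif \<nu> m1 ^ Suc (Suc 0)))"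
      by (rule DERIV_inverse_fun[OF dpsi]) (use tp t1_def in simp)
    then show ?thesis unfolding t1_def[symmetric] by (simp add: inverse_eq_divide)
  qed
  define W where "W = - (inverse (kd t1) * inverse (t1 ^ Suc (Suc 0))) - 1"
  have dVr: "DERIV (Vratio \<nu>) m1 :> W"
  proof -
    have "Vratio \<nu> = (\<lambda>y. 1 / psif \<nu> y - y)" by (simp add: Vratio_def fun_eq_iff)
    then show ?thesis unfolding W_def using DERIV_diff[OF dinv DERIV_ident] by simp
  qed
  have dVf: "DERIV (Vf \<nu>) m1 :> m1 * W + 1 * (1 / t1 - m1)"
  proof -
    have "Vf \<nu> = (\<lambda>y. y * Vratio \<nu> y)" by (simp add: Vratio_def Vf_def fun_eq_iff)
    then show ?thesis using DERIV_mult'[OF DERIV_ident dVr] Vr1 by simp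
  qed
  have var: "a1\<^sup>2 < M2 t1" using variance[OF t1(1)] unfolding a1_def .
  have Wval: "W = - M2 t1 / (M2 t1 - a1\<^sup>2)"
    unfolding W_def kd_def a1_def[symmetric] by (rule alg_W[OF tp(3) ap(2) var])
  have tt1: "m = m1 \<Longrightarrow> t = t1" unfolding t_def t1_def by simp
  have ib: "m = m1 \<and> m1 \<noteq> 0 \<longrightarrow>
        kf (Qf \<nu> m1) (psif \<nu> m) = (2 * m1 * Vf \<nu> m1 - m1\<^sup>2 * deriv (Vf \<nu>) m1)
               / (Vf \<nu> m1 - m1 * deriv (Vf \<nu>) m1)"
  proof
    assume h: "m = m1 \<and> m1 \<noteq> 0"
    show "kf (Qf \<nu> m1) (psif \<nu> m) = (2 * m1 * Vf \<nu> m1 - m1\<^sup>2 * deriv (Vf \<nu>) m1)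
               / (Vf \<nu> m1 - m1 * deriv (Vf \<nu>) m1)"
      unfolding mbar_eq tt1[OF conjunct1[OF h]] k1t1 Vf1 DERIV_imp_deriv[OF dVf]
      by (rule alg_b[OF tp(3) ap(2) var m1_eq conjunct2[OF h] Wval])
  qed
  have id: "m = m1 \<and> m1 = 0 \<longrightarrow> kf (Qf \<nu> m1) (psif \<nu> m) = m1 - Vratio \<nu> m1 / deriv (Vratio \<nu>) m1"
  proof
    assume h: "m = m1 \<and> m1 = 0"
    have a1: "a1 = 1" using m1_eq h ap tp by (simp add: field_simps)
    have M: "1 < M2 t1" using var a1 by simp
    have W1: "W = - M2 t1 / (M2 t1 - 1)" using Wval a1 by simp
    show "kf (Qf \<nu> m1) (psif \<nu> m) = m1 - Vratio \<nu> m1 / deriv (Vratio \<nu>) m1"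
      unfolding mbar_eq tt1[OF conjunct1[OF h]] k1t1 Vr1 DERIV_imp_deriv[OF dVr]
      using alg_d[OF tp(3) M W1] h a1 by simp
  qed
  show ?thesis unfolding mbar_def psi1_def k1_def using ia ib ic id ii1 ii2 iii by blast
qed


end
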